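(* The following activation functions $\phi:\mathbb{R}\to\mathbb{R}$ satisfy Property 1, Property 2 and Property 3: the ReLU $\phi(z)=\max\{z,0\}$, the leaky ReLU $\phi(z)=\max\{z,0.01z\}$, the squared ReLU $\phi(z)=\max\{z,0\}^2$, and every non-linear, non-decreasing smooth function with bounded first derivative $\phi'$ that is symmetric (i.e. $\phi'(z)=\phi'(-z)$) and bounded second derivative, e.g. the sigmoid $\phi(z)=1/(1+e^{-z})$, $\tanh$, and $\phi(z)=\int_0^z e^{-t^2}\,dt$. Moreover, the linear function $\phi(z)=z$ does not satisfy Property 2, and the quadratic function $\phi(z)=z^2$ satisfies neither Property 1 nor Property 2.
   Context: Activation functions are continuous; if $\phi$ is not differentiable, $\phi'$ denotes the left derivative. Let $z\sim\mathcal{N}(0,1)$. Property 1: $0\le \phi'(z)\le L_1|z|^p$ for all $z$, for some constants $L_1>0$, $p\ge 0$. Property 2: for $\sigma>0$ let $\alpha_q(\sigma)=\mathbb{E}[\phi'(\sigma z)z^q]$ for $q\in\{0,1,2\}$, $\beta_q(\sigma)=\mathbb{E}[\phi'(\sigma z)^2 z^q]$ for $q\in\{0,2\}$, and $\rho(\sigma)=\min\{\beta_0(\sigma)-\alpha_0(\sigma)^2-\alpha_1(\sigma)^2,\ \beta_2(\sigma)-\alpha_1(\sigma)^2-\alpha_2(\sigma)^2,\ \alpha_0(\sigma)\alpha_2(\sigma)-\alpha_1(\sigma)^2\}$. Property 2 requires $\rho(\sigma)>0$ for all $\sigma>0$. Property 3: either (a) $|\phi''(z)|\le L_2$ for all $z$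 for some constant $L_2$, or (b) $\phi''(z)=0$ except at finitely many ($e$) points. *)

theory Defs
  imports "HOL-Probability.Probability"
begin

definition left_deriv :: "(real \<Rightarrow> real) \<Rightarrow> real \<Rightarrow> real" where
  "left_deriv f x = Lim (at_left 0) (\<lambda>h. (f (x + h) - f x) / h)"

definition gauss_exp :: "(real \<Rightarrow> real) \<Rightarrow> real" where
  "gauss_exp g = (LINT x|lborel. std_normal_density x * g x)"

text \<open>|z|^p with the usual convention |z|^0 = 1 (also at z = 0).\<close>
definition abs_pow :: "real \<Rightarrow> real \<Rightarrow> real" where
  "abs_pow z p = (if p = 0 then 1 else \<bar>z\<bar> powr p)"

definition property1 :: "(real \<Rightarrow> real) \<Rightarrow> bool" where
  "property1 \<phi> \<longleftrightarrow> (\<exists>L1 p. L1 > 0 \<and> p \<ge> 0 \<and>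
      (\<forall>z. 0 \<le> left_deriv \<phi> z \<and> left_deriv \<phi> z \<le> L1 * abs_pow z p))"

definition alpha :: "(real \<Rightarrow> real) \<Rightarrow> nat \<Rightarrow> real \<Rightarrow> real" where
  "alpha \<phi> q \<sigma> = gauss_exp (\<lambda>z. left_deriv \<phi> (\<sigma> * z) * z ^ q)"

definition beta :: "(real \<Rightarrow> real) \<Rightarrow> nat \<Rightarrow> real \<Rightarrow> real" where
  "beta \<phi> q \<sigma> = gauss_exp (\<lambda>z. (left_deriv \<phi> (\<sigma> * z))\<^sup>2 * z ^ q)"

definition rho :: "(real \<Rightarrow> real) \<Rightarrow> real \<Rightarrow> real" where
  "rho \<phi> \<sigma> = Min {beta \<phi> 0 \<sigma> - (alpha \<phi> 0 \<sigma>)\<^sup>2 - (alpha \<phi> 1 \<sigma>)\<^sup>2,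
                    beta \<phi> 2 \<sigma> - (alpha \<phi> 1 \<sigma>)\<^sup>2 - (alpha \<phi> 2 \<sigma>)\<^sup>2,
                    alpha \<phi> 0 \<sigma> * alpha \<phi> 2 \<sigma> - (alpha \<phi> 1 \<sigma>)\<^sup>2}"

definition property2 :: "(real \<Rightarrow> real) \<Rightarrow> bool" where
  "property2 \<phi> \<longleftrightarrow> (\<forall>\<sigma>>0. rho \<phi> \<sigma> > 0)"

definition property3 :: "(real \<Rightarrow> real) \<Rightarrow> bool" where
  "property3 \<phi> \<longleftrightarrow>
     (\<exists>L2. \<forall>z. \<bar>left_deriv (left_deriv \<phi>) z\<bar> \<le> L2)
     \<or> finite {z. left_deriv (left_deriv \<phi>) z \<noteq> 0}"

definition smooth_with :: "(nat \<Rightarrow> real \<Rightarrow> real) \<Rightarrow> (real \<Rightarrow> real) \<Rightarrow> bool" where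
  "smooth_with D f \<longleftrightarrow> D 0 = f \<and> (\<forall>n x. (D n has_real_derivative D (Suc n) x) (at x))"

definition relu :: "real \<Rightarrow> real" where "relu z = max z 0"
definition leaky_relu :: "real \<Rightarrow> real" where "leaky_relu z = max z (0.01 * z)"
definition squared_relu :: "real \<Rightarrow> real" where "squared_relu z = (max z 0)\<^sup>2"
definition sigmoid :: "real \<Rightarrow> real" where "sigmoid z = 1 / (1 + exp (- z))"
definition gauss_int :: "real \<Rightarrow> real" where
  "gauss_int z = (LBINT t=0..ereal z. exp (- t\<^sup>2))"

end

theory Submission
  imports Defs
begin


lemma left_deriv_DERIV:
  assumes "(f has_real_derivative D) (at x)"
  shows "left_deriv f x = D"
proof -
  have "((\<lambda>h. (f (x + h) - f x) / h) \<longlongrightarrow> D) (at 0)"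
    using assms by (simp add: DERIV_def)
  then have "((\<lambda>h. (f (x + h) - f x) / h) \<longlongrightarrow> D) (at_left 0)"
    by (rule filterlim_mono) (auto simp: at_le)
  then show ?thesis unfolding left_deriv_def
    by (intro tendsto_Lim) (simp_all add: trivial_limit_at_left_real)
qed

lemma left_deriv_cong:
  assumes "d > 0" "\<And>y. x - d < y \<Longrightarrow> y \<le> x \<Longrightarrow> f y = g y"
  shows "left_deriv f x = left_deriv g x"
proof -
  have ev: "eventually (\<lambda>h. h \<in> {-d<..<0}) (at_left (0::real))"
    using assms(1) by (intro eventually_at_left_real) auto
  have "eventually (\<lambda>h. (f (x + h) - f x) / h = (g (x + h) - g x) / h) (at_left (0::real))"
    by (rule eventually_mono[OF ev]) (auto simp: assms(2))
  then have "\<And>L. ((\<lambda>h. (f (x + h) - f x) / h) \<longlongrightarrow> L) (at_left 0) = ((\<lambda>h. (g (x + h) - g x) / h) \<longlongrightarrow> L) (at_left 0)"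
    by (rule tendsto_cong)
  then show ?thesis unfolding left_deriv_def t2_space_class.Lim_def by presburger
qed

lemma left_deriv_fun:
  assumes "\<And>x. (f has_real_derivative D x) (at x)"
  shows "left_deriv f = D"
  using left_deriv_DERIV[OF assms] by auto



lemma dens_even: "std_normal_density (- x) = std_normal_density x"
  by (simp add: std_normal_density_def)

lemma int_reflect:
  fixes f :: "real \<Rightarrow> real"
  shows "(\<integral>x. f x \<partial>lborel) = (\<integral>x. f (- x) \<partial>lborel)"
  using lborel_integral_real_affine[of "-1" f 0] by simp

lemma integrable_reflect:
  fixes f :: "real \<Rightarrow> real"
  assumes "integrable lborel f" shows "integrable lborel (\<lambda>x. f (- x))"
  using lborel_integrable_real_affine[OF assms, of "-1" 0] by simp

definition H :: "nat \<Rightarrow> real" where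
  "H k = (\<integral>x. std_normal_density x * (if x > 0 then x ^ k else 0) \<partial>lborel)"

lemma half_integrable: "integrable lborel (\<lambda>x. std_normal_density x * (if x > 0 then x ^ k else 0))"
  by (rule Bochner_Integration.integrable_bound[OF integrable_std_normal_moment_abs[of k]]) (auto simp: abs_mult)

lemma H_half: "H k = (\<integral>x. std_normal_density x * \<bar>x\<bar> ^ k \<partial>lborel) / 2"
proof -
  define h where "h x = std_normal_density x * \<bar>x\<bar> ^ k" for x
  define P where "P x = (if x > 0 then h x else 0)" for x
  define N where "N x = (if x < 0 then h x else 0)" for x
  have ih: "integrable lborel h" unfolding h_def by (rule integrable_std_normal_moment_abs)
  have iP: "integrable lborel P" unfolding P_def h_def
    by (rule Bochner_Integration.integrable_bound[OF ih[unfolded h_def]]) (auto simp: abs_mult)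
  have iN: "integrable lborel N" unfolding N_def h_def
    by (rule Bochner_Integration.integrable_bound[OF ih[unfolded h_def]]) (auto simp: abs_mult)
  have HP: "H k = integral\<^sup>L lborel P"
    unfolding H_def P_def h_def by (rule Bochner_Integration.integral_cong) auto
  have NP: "integral\<^sup>L lborel N = integral\<^sup>L lborel P"
    by (subst int_reflect) (auto simp: N_def P_def h_def dens_even intro!: Bochner_Integration.integral_cong)
  have "integral\<^sup>L lborel h = integral\<^sup>L lborel (\<lambda>x. P x + N x)"
  proof (rule integral_cong_AE)
    show "h \<in> borel_measurable lborel" using ih by (rule borel_measurable_integrable)
    show "(\<lambda>x. P x + N x) \<in> borel_measurable lborel"
      using Bochner_Integration.integrable_add[OF iP iN] by (rule borel_measurable_integrable)
  qed (auto intro!: eventually_mono[OF AE_lborel_singleton[of 0]]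
        simp: P_def N_def h_def)
  also have "\<dots> = integral\<^sup>L lborel P + integral\<^sup>L lborel N"
    by (rule Bochner_Integration.integral_add[OF iP iN])
  finally show ?thesis using HP NP unfolding h_def by simp
qed

lemma M0: "(\<integral>x. std_normal_density x \<partial>lborel) = 1" by simp
lemma M0': "(\<integral>x. std_normal_density x * x ^ 0 \<partial>lborel) = 1" by simp
lemma M1: "(\<integral>x. std_normal_density x * x ^ 1 \<partial>lborel) = 0"
  using integral_std_normal_moment_odd[of 0] by simp
lemma M2: "(\<integral>x. std_normal_density x * x ^ 2 \<partial>lborel) = 1"
  using integral_std_normal_moment_even[of 1] by (simp add: fact_numeral)

lemma H0: "H 0 = 1/2" by (simp add: H_half)
lemma H1: "H 1 = sqrt (2/pi) / 2"
  using integral_std_normal_moment_abs_odd[of 0] by (simp add: H_half)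
lemma H2: "H 2 = 1/2"
  using integral_std_normal_moment_even[of 1] by (simp add: H_half fact_numeral)
lemma H3: "H 3 = sqrt (2/pi)"
  using integral_std_normal_moment_abs_odd[of 1] by (simp add: H_half numeral_3_eq_3)
lemma H4: "H 4 = 3/2"
  using integral_std_normal_moment_even[of 2] by (simp add: H_half fact_numeral)



lemma left_deriv_piecewise:
  assumes "\<And>y. y > 0 \<Longrightarrow> f y = g y" "\<And>y. y \<le> 0 \<Longrightarrow> f y = h y"
    "\<And>x. (g has_real_derivative g' x) (at x)" "\<And>x. (h has_real_derivative h' x) (at x)"
  shows "left_deriv f = (\<lambda>z. if z > 0 then g' z else h' z)"
proof
  fix z :: real
  show "left_deriv f z = (if z > 0 then g' z else h' z)"
  proof (cases "z > 0")
    case True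
    have "left_deriv f z = left_deriv g z"
      by (rule left_deriv_cong[of z]) (use True assms(1) in auto)
    with True left_deriv_DERIV[OF assms(3)] show ?thesis by simp
  next
    case False
    have "left_deriv f z = left_deriv h z"
      by (rule left_deriv_cong[of 1]) (use False assms(2) in auto)
    with False left_deriv_DERIV[OF assms(4)] show ?thesis by simp
  qed
qed

lemma LD_relu: "left_deriv relu = (\<lambda>z. if z > 0 then 1 else 0)"
  by (rule left_deriv_piecewise[where g="\<lambda>y. y" and h="\<lambda>y. 0"])
     (auto simp: relu_def intro!: derivative_eq_intros)

lemma LD2_relu: "left_deriv (left_deriv relu) = (\<lambda>z. 0)"
  unfolding LD_relu
  by (rule left_deriv_piecewise[where g="\<lambda>y. 1" and h="\<lambda>y. 0", THEN trans])
     (auto intro!: derivative_eq_intros)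

lemma LD_leaky: "left_deriv leaky_relu = (\<lambda>z. if z > 0 then 1 else 1/100)"
  by (rule left_deriv_piecewise[where g="\<lambda>y. y" and h="\<lambda>y. 1/100 * y"])
     (auto simp: leaky_relu_def intro!: derivative_eq_intros)

lemma LD2_leaky: "left_deriv (left_deriv leaky_relu) = (\<lambda>z. 0)"
  unfolding LD_leaky
  by (rule left_deriv_piecewise[where g="\<lambda>y. 1" and h="\<lambda>y. 1/100", THEN trans])
     (auto intro!: derivative_eq_intros)

lemma LD_sq: "left_deriv squared_relu = (\<lambda>z. if z > 0 then 2 * z else 0)"
  by (rule left_deriv_piecewise[where g="\<lambda>y. y^2" and h="\<lambda>y. 0"])
     (auto simp: squared_relu_def intro!: derivative_eq_intros)

lemma LD2_sq: "left_deriv (left_deriv squared_relu) = (\<lambda>z. if z > 0 then 2 else 0)"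
  unfolding LD_sq
  by (rule left_deriv_piecewise[where g="\<lambda>y. 2 * y" and h="\<lambda>y. 0"])
     (auto intro!: derivative_eq_intros)

lemma rho_pos: "0 < a \<Longrightarrow> 0 < b \<Longrightarrow> 0 < c \<Longrightarrow> 0 < Min {a, b, c::real}"
  by simp

lemma Mq_int: "integrable lborel (\<lambda>x. std_normal_density x * x ^ q)"
  by (rule integrable_std_normal_moment)

lemma relu_gauss:
  assumes "\<sigma> > 0"
  shows "gauss_exp (\<lambda>z. (if \<sigma> * z > 0 then a else b) * z ^ q)
     = b * (\<integral>x. std_normal_density x * x ^ q \<partial>lborel) + (a - b) * H q"
proof -
  have "gauss_exp (\<lambda>z. (if \<sigma> * z > 0 then a else b) * z ^ q)
    = (\<integral>x. b * (std_normal_density x * x ^ q) + (a - b) * (std_normal_density x * (if x > 0 then x ^ q else 0)) \<partial>lborel)"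
    unfolding gauss_exp_def using assms
    by (intro Bochner_Integration.integral_cong) (auto simp: zero_less_mult_iff algebra_simps)
  also have "\<dots> = b * (\<integral>x. std_normal_density x * x ^ q \<partial>lborel) + (a - b) * H q"
    unfolding H_def using Mq_int[of q] half_integrable[of q] by simp
  finally show ?thesis .
qed

lemma relu_props: "property1 relu \<and> property2 relu \<and> property3 relu"
proof (intro conjI)
  show "property1 relu" unfolding property1_def LD_relu
    by (rule exI[of _ 1], rule exI[of _ 0]) (auto simp: abs_pow_def)
  show "property3 relu" unfolding property3_def LD2_relu by simp
  show "property2 relu" unfolding property2_def
  proof (intro allI impI)
    fix \<sigma> :: real assume s: "\<sigma> > 0"
    have a: "alpha relu q \<sigma> = H q" for q
      unfolding alpha_def LD_relu using relu_gauss[OF s, of 1 0 q] by simp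
    have b: "beta relu q \<sigma> = H q" for q
      unfolding beta_def LD_relu using relu_gauss[OF s, of 1 0 q]
      by (simp add: if_distrib[of "\<lambda>x. x^2"] cong: if_cong)
    have p: "2/pi < 1" using pi_gt3 by (simp add: field_simps)
    show "0 < rho relu \<sigma>" unfolding rho_def a b H0 H1 H2
      using p by (intro rho_pos) (simp_all add: power_divide real_sqrt_pow2 del: real_sqrt_divide)
  qed
qed



lemma leaky_props: "property1 leaky_relu \<and> property2 leaky_relu \<and> property3 leaky_relu"
proof (intro conjI)
  show "property1 leaky_relu" unfolding property1_def LD_leaky
    by (rule exI[of _ 1], rule exI[of _ 0]) (auto simp: abs_pow_def)
  show "property3 leaky_relu" unfolding property3_def LD2_leaky by simp
  show "property2 leaky_relu" unfolding property2_def
  proof (intro allI impI)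
    fix \<sigma> :: real assume s: "\<sigma> > 0"
    have a: "alpha leaky_relu q \<sigma> = 1/100 * (\<integral>x. std_normal_density x * x ^ q \<partial>lborel) + 99/100 * H q" for q
      unfolding alpha_def LD_leaky using relu_gauss[OF s, of 1 "1/100" q] by simp
    have sq: "(\<lambda>z. (if 0 < \<sigma> * z then 1 else 1 / 100)\<^sup>2 * z ^ q) = (\<lambda>z::real. (if 0 < \<sigma> * z then 1 else 1 / 10000) * z ^ q)" for q
      by (auto simp: fun_eq_iff power2_eq_square)
    have b: "beta leaky_relu q \<sigma> = 1/10000 * (\<integral>x. std_normal_density x * x ^ q \<partial>lborel) + 9999/10000 * H q" for q
      unfolding beta_def LD_leaky sq using relu_gauss[OF s, of 1 "1/10000" q] by simp
    have p: "1/pi < 1/3" using pi_gt3 by (simp add: field_simps)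
    have s2: "(sqrt (2/pi))^2 = 2/pi" by simp
    show "0 < rho leaky_relu \<sigma>" unfolding rho_def a b H0 H1 H2 M0' M1 M2
      apply (intro rho_pos)
      apply (simp_all add: power_divide power_mult_distrib s2 del: real_sqrt_divide)
      using pi_gt3 by (simp_all add: field_simps)
  qed
qed

lemma sq_props: "property1 squared_relu \<and> property2 squared_relu \<and> property3 squared_relu"
proof (intro conjI)
  show "property1 squared_relu" unfolding property1_def LD_sq
    by (rule exI[of _ 2], rule exI[of _ 1]) (auto simp: abs_pow_def)
  show "property3 squared_relu" unfolding property3_def LD2_sq
    by (rule disjI1, rule exI[of _ 2]) auto
  show "property2 squared_relu" unfolding property2_def
  proof (intro allI impI)
    fix \<sigma> :: real assume s: "\<sigma> > 0"
    have e1: "(\<lambda>z. (if 0 < \<sigma> * z then 2 * (\<sigma> * z) else 0) * z ^ q) = (\<lambda>z::real. (if 0 < \<sigma> * z then 2 * \<sigma> else 0) * z ^ (Suc q))" for q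
      by (auto simp: fun_eq_iff)
    have a: "alpha squared_relu q \<sigma> = 2 * \<sigma> * H (Suc q)" for q
      unfolding alpha_def LD_sq e1 using relu_gauss[OF s, of "2*\<sigma>" 0 "Suc q"] by simp
    have e2: "(\<lambda>z. (if 0 < \<sigma> * z then 2 * (\<sigma> * z) else 0)\<^sup>2 * z ^ q) = (\<lambda>z::real. (if 0 < \<sigma> * z then 4 * \<sigma>^2 else 0) * z ^ (Suc (Suc q)))" for q
      by (auto simp: fun_eq_iff power2_eq_square)
    have b: "beta squared_relu q \<sigma> = 4 * \<sigma>^2 * H (Suc (Suc q))" for q
      unfolding beta_def LD_sq e2 using relu_gauss[OF s, of "4*\<sigma>^2" 0 "Suc (Suc q)"] by simp
    have p1: "1/pi < 1/3" using pi_gt3 by (simp add: field_simps)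
    have p2: "1/4 < 1/pi" using pi_less_4 by (simp add: field_simps)
    have s2: "(sqrt (2/pi))^2 = 2/pi" by simp
    have H: "H (Suc 0) = sqrt (2/pi) / 2" "H (Suc (Suc 0)) = 1/2" "H (Suc (Suc (Suc 0))) = sqrt (2/pi)"
      "H (Suc (Suc (Suc (Suc 0)))) = 3/2"
      using H1 H2 H3 H4 by (simp_all add: numeral_eq_Suc)
    have ss: "\<sigma>^2 > 0" using s by simp
    have H2': "H (Suc (Suc 0)) = 1/2" using H2 by (simp add: numeral_eq_Suc)
    have r1: "beta squared_relu 0 \<sigma> - (alpha squared_relu 0 \<sigma>)\<^sup>2 - (alpha squared_relu 1 \<sigma>)\<^sup>2 = \<sigma>^2 * (1 - 2/pi)"
      unfolding a b using H H2' by (simp add: power_mult_distrib power_divide s2 algebra_simps del: real_sqrt_divide)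
    have r2: "beta squared_relu 2 \<sigma> - (alpha squared_relu 1 \<sigma>)\<^sup>2 - (alpha squared_relu 2 \<sigma>)\<^sup>2 = \<sigma>^2 * (5 - 8/pi)"
      unfolding a b using H H2' by (simp add: numeral_eq_Suc power_mult_distrib power_divide s2 algebra_simps del: real_sqrt_divide)
    have r3: "alpha squared_relu 0 \<sigma> * alpha squared_relu 2 \<sigma> - (alpha squared_relu 1 \<sigma>)\<^sup>2 = \<sigma>^2 * (4/pi - 1)"
      unfolding a b using H H2' by (simp add: numeral_eq_Suc power_mult_distrib power_divide s2 algebra_simps del: real_sqrt_divide)
    show "0 < rho squared_relu \<sigma>" unfolding rho_def r1 r2 r3
      using p1 p2 ss pi_gt3 by (intro rho_pos mult_pos_pos) (auto simp: field_simps)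
  qed
qed



lemma rho_le: "a \<le> 0 \<or> b \<le> 0 \<or> c \<le> 0 \<Longrightarrow> \<not> 0 < Min {a, b, c::real}"
  by auto

lemma lin_not2: "\<not> property2 (\<lambda>z::real. z)"
proof -
  have LD: "left_deriv (\<lambda>z::real. z) = (\<lambda>z. 1)"
    by (rule left_deriv_fun) (auto intro!: derivative_eq_intros)
  have "alpha (\<lambda>z. z) q 1 = (\<integral>x. std_normal_density x * x ^ q \<partial>lborel)" for q
    unfolding alpha_def gauss_exp_def LD by simp
  moreover have "beta (\<lambda>z. z) 0 1 = 1"
    unfolding beta_def gauss_exp_def LD by simp
  ultimately have "\<not> 0 < rho (\<lambda>z. z) 1" unfolding rho_def
    by (intro rho_le) (simp add: M0' M1)
  then show ?thesis unfolding property2_def using zero_less_one by blast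
qed

lemma LD_quad: "left_deriv (\<lambda>z::real. z\<^sup>2) = (\<lambda>z. 2 * z)"
  by (rule left_deriv_fun) (auto intro!: derivative_eq_intros)

lemma quad_not1: "\<not> property1 (\<lambda>z::real. z\<^sup>2)"
  unfolding property1_def LD_quad by (auto intro!: exI[of _ "-1"])

lemma quad_not2: "\<not> property2 (\<lambda>z::real. z\<^sup>2)"
proof -
  have "alpha (\<lambda>z. z\<^sup>2) q 1 = 2 * (\<integral>x. std_normal_density x * x ^ Suc q \<partial>lborel)" for q
    unfolding alpha_def gauss_exp_def LD_quad
    using integral_mult_right_zero[of lborel 2 "\<lambda>x. std_normal_density x * (x * x ^ q)"]
    by (simp add: algebra_simps)
  then have "alpha (\<lambda>z. z\<^sup>2) 0 1 = 0" "alpha (\<lambda>z. z\<^sup>2) 1 1 = 2"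
    using M1 M2 by (simp_all add: numeral_2_eq_2)
  then have "\<not> 0 < rho (\<lambda>z. z\<^sup>2) 1" unfolding rho_def
    by (intro rho_le) simp
  then show ?thesis unfolding property2_def using zero_less_one by blast
qed



lemma gauss_pos:
  fixes h :: "real \<Rightarrow> real"
  assumes c: "continuous_on UNIV h" and nn: "\<And>x. h x \<ge> 0" and z0: "h z0 > 0"
    and int: "integrable lborel (\<lambda>x. std_normal_density x * h x)"
  shows "(\<integral>x. std_normal_density x * h x \<partial>lborel) > 0"
proof -
  have ge: "(\<integral>x. std_normal_density x * h x \<partial>lborel) \<ge> 0"
    using nn by (intro Bochner_Integration.integral_nonneg) auto
  have "open {x. (\<lambda>_. 0) x < h x}" by (rule open_Collect_less) (use c in auto)
  then obtain e where e: "e > 0" "ball z0 e \<subseteq> {x. 0 < h x}"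
    using z0 by (auto elim!: openE)
  have sub: "{z0 - e/2 .. z0 + e/2} \<subseteq> {x. 0 < h x}"
    using e by (force simp: dist_real_def)
  show ?thesis
  proof (rule ccontr)
    assume "\<not> ?thesis"
    with ge have "(\<integral>x. std_normal_density x * h x \<partial>lborel) = 0" by simp
    then have "AE x in lborel. std_normal_density x * h x = 0"
      using integral_nonneg_eq_0_iff_AE[OF int] nn by simp
    then have "AE x in lborel. x \<notin> {z0 - e/2 .. z0 + e/2}"
    proof (rule eventually_mono)
      fix x assume "std_normal_density x * h x = 0"
      then have "h x = 0" using normal_density_pos[of 1 0 x] by simp
      then show "x \<notin> {z0 - e/2 .. z0 + e/2}" using sub by force
    qed
    then have "emeasure lborel {z0 - e/2 .. z0 + e/2} = 0"
      by (subst (asm) AE_iff_measurable[of "{z0 - e/2 .. z0 + e/2}"]) auto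
    then show False using e by simp
  qed
qed

lemma int_bdd:
  fixes h :: "real \<Rightarrow> real"
  assumes c: "continuous_on UNIV h" and b: "\<And>x. \<bar>h x\<bar> \<le> C"
  shows "integrable lborel (\<lambda>x. std_normal_density x * (h x * x ^ k))"
proof (rule Bochner_Integration.integrable_bound)
  show "integrable lborel (\<lambda>x. C * (std_normal_density x * \<bar>x\<bar> ^ k))"
    by (intro integrable_mult_right integrable_std_normal_moment_abs)
  have "h \<in> borel_measurable borel" using c by (rule borel_measurable_continuous_onI)
  then show "(\<lambda>x. std_normal_density x * (h x * x ^ k)) \<in> borel_measurable lborel"
    by measurable
  have C: "C \<ge> 0" using b[of 0] by simp
  show "AE x in lborel. norm (std_normal_density x * (h x * x ^ k)) \<le> norm (C * (std_normal_density x * \<bar>x\<bar> ^ k))"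
  proof (intro AE_I2)
    fix x
    have "\<bar>h x\<bar> * (std_normal_density x * \<bar>x\<bar> ^ k) \<le> C * (std_normal_density x * \<bar>x\<bar> ^ k)"
      by (intro mult_right_mono b) auto
    then show "norm (std_normal_density x * (h x * x ^ k)) \<le> norm (C * (std_normal_density x * \<bar>x\<bar> ^ k))"
      using C by (simp add: abs_mult power_abs algebra_simps)
  qed
qed

lemma nonconst_nz:
  fixes F :: "real \<Rightarrow> real"
  assumes c: "continuous_on UNIV F" and ab: "F a \<noteq> F b"
  shows "\<exists>z. z \<noteq> 0 \<and> F z \<noteq> v"
proof (rule ccontr)
  assume "\<not> ?thesis"
  then have all: "\<And>z. z \<noteq> 0 \<Longrightarrow> F z = v" by auto
  have "(F \<longlongrightarrow> F 0) (at 0)" using c by (simp add: continuous_on_def)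
  moreover have "(F \<longlongrightarrow> v) (at 0)"
    by (rule tendsto_eventually) (auto simp: eventually_at_filter all)
  ultimately have "F 0 = v" using tendsto_unique by (metis trivial_limit_at)
  then have "\<And>z. F z = v" using all by metis
  with ab show False by simp
qed



lemma core:
  fixes \<phi> f g :: "real \<Rightarrow> real"
  assumes d1: "\<And>x. (\<phi> has_real_derivative f x) (at x)"
    and d2: "\<And>x. (f has_real_derivative g x) (at x)"
    and nn: "\<And>x. f x \<ge> 0" and fb: "\<And>x. \<bar>f x\<bar> \<le> B" and gb: "\<And>x. \<bar>g x\<bar> \<le> B2"
    and ev: "\<And>x. f (- x) = f x" and nc: "f a \<noteq> f b"
  shows "property1 \<phi> \<and> property2 \<phi> \<and> property3 \<phi>"
proof -
  have L1: "left_deriv \<phi> = f" by (rule left_deriv_fun[OF d1])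
  have L2: "left_deriv f = g" by (rule left_deriv_fun[OF d2])
  have p1: "property1 \<phi>" unfolding property1_def L1
    by (rule exI[of _ "max B 1"], rule exI[of _ 0]) (use nn fb in \<open>auto simp: abs_pow_def intro: order_trans[OF abs_le_D1[OF fb] max.cobounded1]\<close>)
  have p3: "property3 \<phi>" unfolding property3_def L1 L2 using gb by blast
  have p2: "property2 \<phi>" unfolding property2_def
  proof (intro allI impI)
    fix \<sigma> :: real assume s: "\<sigma> > 0"
    define F where "F z = f (\<sigma> * z)" for z
    have Fd: "(F has_real_derivative \<sigma> * g (\<sigma> * x)) (at x)" for x
    proof -
      have "((\<lambda>z. \<sigma> * z) has_real_derivative \<sigma>) (at x)"
        by (auto intro!: derivative_eq_intros)
      from DERIV_chain2[OF d2 this] show ?thesis unfolding F_def by (simp add: algebra_simps)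
    qed
    have Fc: "continuous_on UNIV F"
      using Fd by (intro continuous_at_imp_continuous_on ballI DERIV_isCont) blast
    have F2c: "continuous_on UNIV (\<lambda>z. (F z)\<^sup>2)" using Fc by (intro continuous_intros)
    have Fnn: "F z \<ge> 0" for z unfolding F_def by (rule nn)
    have Fb: "\<bar>F z\<bar> \<le> B" for z unfolding F_def by (rule fb)
    have F2b: "\<bar>(F z)\<^sup>2\<bar> \<le> B\<^sup>2" for z using Fb[of z] Fnn[of z] by (simp add: power_mono)
    have Fev: "F (- z) = F z" for z unfolding F_def using ev[of "\<sigma> * z"] by simp
    have Fnc: "F (a/\<sigma>) \<noteq> F (b/\<sigma>)" unfolding F_def using s nc by simp
    define A where "A q = (\<integral>x. std_normal_density x * (F x * x ^ q) \<partial>lborel)" for q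
    define Bt where "Bt q = (\<integral>x. std_normal_density x * ((F x)\<^sup>2 * x ^ q) \<partial>lborel)" for q
    have iA: "integrable lborel (\<lambda>x. std_normal_density x * (F x * x ^ q))" for q
      by (rule int_bdd[OF Fc Fb])
    have iB: "integrable lborel (\<lambda>x. std_normal_density x * ((F x)\<^sup>2 * x ^ q))" for q
      by (rule int_bdd[OF F2c F2b])
    have aA: "alpha \<phi> q \<sigma> = A q" for q unfolding alpha_def gauss_exp_def L1 A_def F_def ..
    have bB: "beta \<phi> q \<sigma> = Bt q" for q unfolding beta_def gauss_exp_def L1 Bt_def F_def ..
    have A1: "A 1 = 0"
    proof -
      have "A 1 = (\<integral>x. std_normal_density (- x) * (F (- x) * (- x) ^ 1) \<partial>lborel)"
        unfolding A_def by (rule int_reflect)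
      also have "\<dots> = - A 1" unfolding A_def dens_even Fev by simp
      finally show ?thesis by simp
    qed
    obtain z1 where z1: "z1 \<noteq> 0" "F z1 \<noteq> 0" using nonconst_nz[OF Fc Fnc] by blast
    have A0: "A 0 > 0" unfolding A_def
      using gauss_pos[of "\<lambda>x. F x * x ^ 0" z1] iA[of 0] Fc Fnn z1
      by (simp add: order.strict_iff_order)
    have A2: "A 2 > 0" unfolding A_def
    proof (rule gauss_pos)
      show "continuous_on UNIV (\<lambda>x. F x * x ^ 2)" using Fc by (intro continuous_intros)
      show "F z1 * z1 ^ 2 > 0" using z1 Fnn[of z1] by (simp add: order.strict_iff_order)
    qed (use iA Fnn in auto)
    obtain z2 where z2: "F z2 \<noteq> A 0" using Fnc by metis
    have V1: "(\<integral>x. std_normal_density x * (F x - A 0)\<^sup>2 \<partial>lborel) = Bt 0 - (A 0)\<^sup>2"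
    proof -
      have "(\<integral>x. std_normal_density x * (F x - A 0)\<^sup>2 \<partial>lborel)
        = (\<integral>x. std_normal_density x * ((F x)\<^sup>2 * x ^ 0) - 2 * A 0 * (std_normal_density x * (F x * x ^ 0))
             + (A 0)\<^sup>2 * std_normal_density x \<partial>lborel)"
        by (rule Bochner_Integration.integral_cong) (auto simp: power2_eq_square algebra_simps)
      also have "\<dots> = Bt 0 - 2 * A 0 * A 0 + (A 0)\<^sup>2"
        unfolding A_def Bt_def using iA[of 0] iB[of 0] by simp
      finally show ?thesis by (simp add: power2_eq_square)
    qed
    have V1p: "(\<integral>x. std_normal_density x * (F x - A 0)\<^sup>2 \<partial>lborel) > 0"
    proof (rule gauss_pos)
      show "continuous_on UNIV (\<lambda>x. (F x - A 0)\<^sup>2)" using Fc by (intro continuous_intros)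
      show "(F z2 - A 0)\<^sup>2 > 0" using z2 by simp
      show "integrable lborel (\<lambda>x. std_normal_density x * (F x - A 0)\<^sup>2)"
      proof -
        have "(\<lambda>x. std_normal_density x * (F x - A 0)\<^sup>2) = (\<lambda>x. std_normal_density x * ((F x)\<^sup>2 * x ^ 0) - 2 * A 0 * (std_normal_density x * (F x * x ^ 0))
             + (A 0)\<^sup>2 * std_normal_density x)"
          by (auto simp: fun_eq_iff power2_eq_square algebra_simps)
        then show ?thesis using iA[of 0] iB[of 0] by simp
      qed
    qed simp
    obtain z3 where z3: "z3 \<noteq> 0" "F z3 \<noteq> A 2" using nonconst_nz[OF Fc Fnc] by blast
    have V2: "(\<integral>x. std_normal_density x * ((F x - A 2)\<^sup>2 * x\<^sup>2) \<partial>lborel) = Bt 2 - (A 2)\<^sup>2"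
    proof -
      have "(\<integral>x. std_normal_density x * ((F x - A 2)\<^sup>2 * x\<^sup>2) \<partial>lborel)
        = (\<integral>x. std_normal_density x * ((F x)\<^sup>2 * x ^ 2) - 2 * A 2 * (std_normal_density x * (F x * x ^ 2))
             + (A 2)\<^sup>2 * (std_normal_density x * x ^ 2) \<partial>lborel)"
        by (rule Bochner_Integration.integral_cong) (auto simp: power2_eq_square algebra_simps)
      also have "\<dots> = Bt 2 - 2 * A 2 * A 2 + (A 2)\<^sup>2"
        unfolding A_def Bt_def using iA[of 2] iB[of 2] Mq_int[of 2] M2 by simp
      finally show ?thesis by (simp add: power2_eq_square)
    qed
    have V2p: "(\<integral>x. std_normal_density x * ((F x - A 2)\<^sup>2 * x\<^sup>2) \<partial>lborel) > 0"
    proof (rule gauss_pos)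
      show "continuous_on UNIV (\<lambda>x. (F x - A 2)\<^sup>2 * x\<^sup>2)" using Fc by (intro continuous_intros)
      show "(F z3 - A 2)\<^sup>2 * z3\<^sup>2 > 0" using z3 by simp
      have "(\<lambda>x. std_normal_density x * ((F x - A 2)\<^sup>2 * x\<^sup>2)) = (\<lambda>x. std_normal_density x * ((F x)\<^sup>2 * x ^ 2) - 2 * A 2 * (std_normal_density x * (F x * x ^ 2))
             + (A 2)\<^sup>2 * (std_normal_density x * x ^ 2))"
        by (auto simp: fun_eq_iff power2_eq_square algebra_simps)
      then show "integrable lborel (\<lambda>x. std_normal_density x * ((F x - A 2)\<^sup>2 * x\<^sup>2))"
        using iA[of 2] iB[of 2] Mq_int[of 2] by simp
    qed simp
    show "0 < rho \<phi> \<sigma>" unfolding rho_def aA bB A1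
      using V1 V1p V2 V2p A0 A2 by (intro rho_pos) simp_all
  qed
  show ?thesis using p1 p2 p3 by blast
qed



lemma general_class:
  assumes "smooth_with D \<phi> \<and> \<not> (\<exists>a b. \<forall>z. \<phi> z = a * z + b) \<and> mono \<phi>
          \<and> (\<exists>B. \<forall>z. \<bar>D 1 z\<bar> \<le> B) \<and> (\<forall>z. D 1 z = D 1 (- z)) \<and> (\<exists>B. \<forall>z. \<bar>D 2 z\<bar> \<le> B)"
  shows "property1 \<phi> \<and> property2 \<phi> \<and> property3 \<phi>"
proof -
  from assms have sm: "smooth_with D \<phi>" and nl: "\<not> (\<exists>a b. \<forall>z. \<phi> z = a * z + b)"
    and mo: "mono \<phi>" and ev: "\<forall>z. D 1 z = D 1 (- z)" by (blast, blast, blast, blast)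
  from assms obtain B where B: "\<forall>z. \<bar>D 1 z\<bar> \<le> B" by blast
  from assms obtain B2 where B2: "\<forall>z. \<bar>D 2 z\<bar> \<le> B2" by blast
  have d1: "(\<phi> has_real_derivative D 1 x) (at x)" for x
  proof -
    have "D 0 = \<phi>" "\<And>n x. (D n has_real_derivative D (Suc n) x) (at x)" using sm unfolding smooth_with_def by auto
    then show ?thesis by (metis One_nat_def)
  qed
  have d2: "(D 1 has_real_derivative D 2 x) (at x)" for x
  proof -
    have "\<And>n x. (D n has_real_derivative D (Suc n) x) (at x)" using sm unfolding smooth_with_def by auto
    from this[of 1 x] show ?thesis by (simp add: numeral_2_eq_2)
  qed
  have nn: "D 1 x \<ge> 0" for x
  proof -
    have m: "mono_on UNIV \<phi>" using mo by (simp add: mono_on_def mono_def)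
    show ?thesis by (rule mono_on_imp_deriv_nonneg[OF m d1]) simp
  qed
  have nc: "\<exists>a b. D 1 a \<noteq> D 1 b"
  proof (rule ccontr)
    assume "\<not> ?thesis"
    then have c0: "D 1 x = D 1 0" for x by blast
    have c: "D 1 x - D 1 0 = 0" for x using c0[of x] by linarith
    have "((\<lambda>z. \<phi> z - D 1 0 * z) has_real_derivative D 1 x - D 1 0) (at x)" for x
      using DERIV_diff[OF d1 DERIV_cmult[OF DERIV_ident, of "D 1 0"], of x] by simp
    then have "\<forall>x. ((\<lambda>z. \<phi> z - D 1 0 * z) has_real_derivative 0) (at x)"
      unfolding c by blast
    then have e: "\<phi> z - D 1 0 * z = \<phi> 0 - D 1 0 * 0" for z by (rule DERIV_isconst_all)
    have "\<forall>z. \<phi> z = D 1 0 * z + \<phi> 0"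
    proof
      fix z show "\<phi> z = D 1 0 * z + \<phi> 0" using e[of z] by linarith
    qed
    with nl show False by blast
  qed
  then obtain a b where ab: "D 1 a \<noteq> D 1 b" by blast
  have ev': "D 1 (- x) = D 1 x" for x using spec[OF ev, of x] by (rule sym)
  show ?thesis
    apply (rule core[OF d1 d2 nn, of B B2 a b])
    using B B2 ev' ab apply -
    apply (erule allE, assumption)
    apply (erule allE, assumption)
    apply (rule ev')
    by (rule ab)
qed



lemma gauss_int_deriv: "(gauss_int has_real_derivative exp (- x\<^sup>2)) (at x)"
proof -
  define a where "a = - \<bar>x\<bar> - 1"
  define b where "b = \<bar>x\<bar> + 1"
  have "((\<lambda>u. LBINT y=ereal 0..ereal u. exp (- y\<^sup>2)) has_vector_derivative exp (- x\<^sup>2)) (at x within {a..b})"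
    by (rule interval_integral_FTC2) (auto simp: a_def b_def intro!: continuous_intros)
  moreover have "x \<in> interior {a..b}" by (auto simp: a_def b_def)
  then have eq: "at x within {a..b} = at x" by (rule at_within_interior)
  ultimately have "((\<lambda>u. LBINT y=ereal 0..ereal u. exp (- y\<^sup>2)) has_vector_derivative exp (- x\<^sup>2)) (at x)"
    by (simp only: eq)
  then show ?thesis unfolding gauss_int_def
    by (simp add: has_real_derivative_iff_has_vector_derivative zero_ereal_def)
qed

lemma gauss_int_props: "property1 gauss_int \<and> property2 gauss_int \<and> property3 gauss_int"
proof (rule core[of _ "\<lambda>x. exp (- x\<^sup>2)" "\<lambda>x. - 2 * x * exp (- x\<^sup>2)" 1 2 0 1])
  show "(gauss_int has_real_derivative exp (- x\<^sup>2)) (at x)" for x by (rule gauss_int_deriv)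
  show "((\<lambda>x. exp (- x\<^sup>2)) has_real_derivative - 2 * x * exp (- x\<^sup>2)) (at x)" for x
    by (auto intro!: derivative_eq_intros)
  show "\<bar>- 2 * x * exp (- x\<^sup>2)\<bar> \<le> 2" for x :: real
  proof -
    have "\<bar>x\<bar> \<le> 1 + x\<^sup>2"
    proof -
      have "0 \<le> (\<bar>x\<bar> - 1)\<^sup>2" by simp
      then have "0 \<le> x\<^sup>2 - 2 * \<bar>x\<bar> + 1" by (simp add: power2_eq_square algebra_simps)
      moreover have "0 \<le> x\<^sup>2" by simp
      ultimately show ?thesis by linarith
    qed
    also have "\<dots> \<le> exp (x\<^sup>2)" by (rule exp_ge_add_one_self)
    finally have le: "\<bar>x\<bar> \<le> exp (x\<^sup>2)" .
    have "\<bar>x\<bar> * exp (- x\<^sup>2) \<le> exp (x\<^sup>2) * exp (- x\<^sup>2)"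
      by (rule mult_right_mono[OF le]) simp
    also have "\<dots> = 1" by (simp add: exp_add[symmetric])
    finally have "\<bar>x\<bar> * exp (- x\<^sup>2) \<le> 1" .
    then show ?thesis by (simp add: abs_mult)
  qed
  show "\<bar>exp (- x\<^sup>2)\<bar> \<le> 1" for x :: real by simp
  show "0 \<le> exp (- x\<^sup>2)" for x :: real by simp
  show "exp (- (- x)\<^sup>2) = exp (- x\<^sup>2)" for x :: real by simp
  show "exp (- 0\<^sup>2) \<noteq> exp (- (1::real)\<^sup>2)" by simp
qed



lemma tanh_props: "property1 tanh \<and> property2 tanh \<and> property3 tanh"
proof (rule core[of _ "\<lambda>x. 1 - tanh x ^ 2" "\<lambda>x. - 2 * tanh x * (1 - tanh x ^ 2)" 1 2 0 1])
  show "(tanh has_real_derivative 1 - tanh x ^ 2) (at x)" for x :: real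
    by (auto intro!: derivative_eq_intros simp: cosh_real_pos[THEN less_imp_neq, symmetric])
  show "((\<lambda>x. 1 - tanh x ^ 2) has_real_derivative - 2 * tanh x * (1 - tanh x ^ 2)) (at x)" for x :: real
    by (auto intro!: derivative_eq_intros simp: cosh_real_pos[THEN less_imp_neq, symmetric])
  fix x :: real
  have t: "\<bar>tanh x\<bar> < 1" using tanh_real_bounds[of x] by auto
  have t2: "tanh x ^ 2 \<le> 1" using t by (simp add: abs_square_le_1)
  show nn: "0 \<le> 1 - tanh x ^ 2" using t2 by simp
  show "\<bar>1 - tanh x ^ 2\<bar> \<le> 1" using nn by simp
  have "\<bar>tanh x\<bar> * (1 - tanh x ^ 2) \<le> 1 * 1"
    using t nn by (intro mult_mono) auto
  then show "\<bar>- 2 * tanh x * (1 - tanh x ^ 2)\<bar> \<le> 2" using nn by (simp add: abs_mult)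
  show "1 - tanh (- x) ^ 2 = 1 - tanh x ^ 2" by simp
  show "1 - tanh 0 ^ 2 \<noteq> 1 - tanh (1::real) ^ 2" by simp
qed

lemma sig_alg1: "(a::real) > 0 \<Longrightarrow> a \<le> (1 + a)^2"
  by (simp add: power2_eq_square algebra_simps)
lemma sig_alg2: "(a::real) > 0 \<Longrightarrow> \<bar>a * (a - 1)\<bar> \<le> (1 + a)^3"
proof -
  assume a: "a > 0"
  have "\<bar>a * (a - 1)\<bar> \<le> a * (a + 1)" using a by (simp add: abs_mult abs_le_iff)
  also have "\<dots> \<le> (1 + a)^3" using a by (simp add: power3_eq_cube algebra_simps)
  finally show ?thesis .
qed

lemma sig_alg3: "(a::real) > 0 \<Longrightarrow> (- a * (1 + a)^2 - 2 * (1 + a) * (- a) * a) / ((1 + a)^2) ^ Suc (Suc 0)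
   = a * (a - 1) / (1 + a)^3"
proof -
  assume a: "a > 0"
  then have q: "1 + a \<noteq> 0" by simp
  have "(- a * (1 + a)^2 - 2 * (1 + a) * (- a) * a) = (1 + a) * (a * (a - 1))"
    by (simp add: power2_eq_square algebra_simps)
  moreover have "((1 + a)^2) ^ Suc (Suc 0) = (1 + a) * (1 + a)^3"
    by (simp add: power2_eq_square power3_eq_cube)
  ultimately show ?thesis using q by simp
qed

lemma sigmoid_props: "property1 sigmoid \<and> property2 sigmoid \<and> property3 sigmoid"
proof (rule core[of _ "\<lambda>x. exp (- x) / (1 + exp (- x))^2" "\<lambda>x. exp (- x) * (exp (- x) - 1) / (1 + exp (- x))^3" 1 1 0 1])
  fix x :: real
  have p: "1 + exp (- x) \<noteq> 0" by (smt (verit) exp_gt_zero)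
  show "(sigmoid has_real_derivative exp (- x) / (1 + exp (- x))^2) (at x)"
    unfolding sigmoid_def using p by (auto intro!: derivative_eq_intros simp: power2_eq_square field_simps)
  show "((\<lambda>x. exp (- x) / (1 + exp (- x))^2) has_real_derivative exp (- x) * (exp (- x) - 1) / (1 + exp (- x))^3) (at x)"
  proof -
    have A: "((\<lambda>x. exp (- x)) has_real_derivative - exp (- x)) (at x)"
      by (auto intro!: derivative_eq_intros)
    have B: "((\<lambda>x. (1 + exp (- x))^2) has_real_derivative 2 * (1 + exp (- x)) * (- exp (- x))) (at x)"
      by (auto intro!: derivative_eq_intros)
    have p2: "(1 + exp (- x))^2 \<noteq> 0" using p by simp
    show ?thesis
      by (rule DERIV_cong[OF DERIV_quotient[OF A B p2]]) (rule sig_alg3, simp)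
  qed
  show "0 \<le> exp (- x) / (1 + exp (- x))^2" by simp
  show "\<bar>exp (- x) / (1 + exp (- x))^2\<bar> \<le> 1"
    using sig_alg1[of "exp (- x)"] p by (simp add: divide_le_eq)
  show "\<bar>exp (- x) * (exp (- x) - 1) / (1 + exp (- x))^3\<bar> \<le> 1"
    using sig_alg2[of "exp (- x)"] p add_pos_pos[OF zero_less_one exp_gt_zero[of "- x"]]
    by (simp add: divide_le_eq abs_divide)
  show "exp (- (- x)) / (1 + exp (- (- x)))^2 = exp (- x) / (1 + exp (- x))^2"
    using p by (simp add: exp_minus field_simps power2_eq_square)
  show "exp (- 0) / (1 + exp (- 0))^2 \<noteq> exp (- 1) / (1 + exp (- (1::real)))^2"
  proof
    assume "exp (- 0) / (1 + exp (- 0))^2 = exp (- 1) / (1 + exp (- (1::real)))^2"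
    then have "4 * exp (- 1) = (1 + exp (- (1::real)))^2" by (simp add: field_simps)
    then have "(exp (- 1) - 1)^2 = (0::real)" by (simp add: power2_eq_square algebra_simps)
    then show False by simp
  qed
qed

theorem mainTheorem1:
  shows "(property1 relu \<and> property2 relu \<and> property3 relu)
    \<and> (property1 leaky_relu \<and> property2 leaky_relu \<and> property3 leaky_relu)
    \<and> (property1 squared_relu \<and> property2 squared_relu \<and> property3 squared_relu)
    \<and> (\<forall>\<phi> D. smooth_with D \<phi>
          \<and> \<not> (\<exists>a b. \<forall>z. \<phi> z = a * z + b)
          \<and> mono \<phi>
          \<and> (\<exists>B. \<forall>z. \<bar>D 1 z\<bar> \<le> B)
          \<and> (\<forall>z. D 1 z = D 1 (- z))
          \<and> (\<exists>B. \<forall>z. \<bar>D 2 z\<bar> \<le> B)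
        \<longrightarrow> property1 \<phi> \<and> property2 \<phi> \<and> property3 \<phi>)
    \<and> (property1 sigmoid \<and> property2 sigmoid \<and> property3 sigmoid)
    \<and> (property1 tanh \<and> property2 tanh \<and> property3 tanh)
    \<and> (property1 gauss_int \<and> property2 gauss_int \<and> property3 gauss_int)
    \<and> \<not> property2 (\<lambda>z::real. z)
    \<and> \<not> property1 (\<lambda>z::real. z\<^sup>2) \<and> \<not> property2 (\<lambda>z::real. z\<^sup>2)"
    using relu_props leaky_props sq_props general_class sigmoid_props tanh_props gauss_int_props
    lin_not2 quad_not1 quad_not2 by blast

end
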